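(* Fix $p\in(1,\infty)$ and Radon measures $\mu,\nu$ on $\mathbb{R}^N$. Let $M\in W(\mathbb{R}^N\times\mathbb{R}^N)=W(\mathbb{R}^{2N})$. Then $M$ is a Schur multiplier on the set of restrictedly $L^p$ bounded singular kernels on $\mathbb{R}^N$, with restricted Schur norm at most $\|M\|_{W(\mathbb{R}^{2N})}$.
   Context: A singular kernel on $\mathbb{R}^N$ (w.r.t. Radon measures $\mu,\nu$) is a $\mu\times\nu$-measurable function $K$ on $\mathbb{R}^N\times\mathbb{R}^N$ which is locally in $L^2(\mu\times\nu)$ off the diagonal $\{s=t\}$. It is restrictedly $L^p$ bounded with bound $C$ if $\left|\int K(s,t)f(t)g(s)\,d\mu(t)\,d\nu(s)\right|\le C\|f\|_{L^p(\mu)}\|g\|_{L^{p'}(\nu)}$ ($1/p+1/p'=1$) for all bounded Borel $f,g$ with compact supports at positive distance from each other. A function $M$ on $\mathbb{R}^N\times\mathbb{R}^N$ is a Schur multiplier on the set of restrictedly $L^p$ bounded singular kernels if there is $C_1$ such that for every restrictedly $L^p$ bounded singular kernel $K$ with bound $C$, $MK$ is restrictedly $L^p$ bounded with bound $C_1C$; the least such $C_1$ is the restricted Schur norm. The Wiener algebra $W(\mathbb{R}^d)$ is the set of $f=\widehat h$, $h\in L^1(\mathbb{R}^d)$, with $\|f\|_W=\|h\|_{L^1}$, where $\widehat h(\xi)=\int h(x)e^{-i\xi\cdot x}dx$. *)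

theory Defs
  imports "HOL-Analysis.Analysis"
begin

definition radon_measure :: "'a::euclidean_space measure \<Rightarrow> bool" where
  "radon_measure \<mu> \<longleftrightarrow> sets \<mu> = sets borel \<and> (\<forall>K. compact K \<longrightarrow> emeasure \<mu> K < \<infinity>)"

text \<open>L^p norm (for the bounded, compactly supported functions used below).\<close>
definition Lp_norm :: "'a measure \<Rightarrow> real \<Rightarrow> ('a \<Rightarrow> complex) \<Rightarrow> real" where
  "Lp_norm \<mu> p f = (\<integral>x. norm (f x) powr p \<partial>\<mu>) powr (1 / p)"

definition fsupp :: "('a::topological_space \<Rightarrow> complex) \<Rightarrow> 'a set" where
  "fsupp f = closure {x. f x \<noteq> 0}"

text \<open>Kernels are functions of (s,t); the product measure has s distributed by nu, t by mu.\<close>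
definition singular_kernel ::
  "'a::euclidean_space measure \<Rightarrow> 'a measure \<Rightarrow> ('a \<times> 'a \<Rightarrow> complex) \<Rightarrow> bool" where
  "singular_kernel \<mu> \<nu> K \<longleftrightarrow>
     K \<in> borel_measurable (completion (\<nu> \<Otimes>\<^sub>M \<mu>)) \<and>
     (\<forall>C. compact C \<and> C \<inter> {z. fst z = snd z} = {} \<longrightarrow>
        (\<integral>\<^sup>+ z. ennreal ((norm (K z))\<^sup>2) * indicator C z \<partial>(completion (\<nu> \<Otimes>\<^sub>M \<mu>))) < \<infinity>)"

definition admissible_pair :: "('a::euclidean_space \<Rightarrow> complex) \<Rightarrow> ('a \<Rightarrow> complex) \<Rightarrow> bool" where
  "admissible_pair f g \<longleftrightarrow>
     f \<in> borel_measurable borel \<and> g \<in> borel_measurable borel \<and>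
     bounded (range f) \<and> bounded (range g) \<and>
     compact (fsupp f) \<and> compact (fsupp g) \<and>
     (\<exists>\<delta>>0. \<forall>x\<in>fsupp f. \<forall>y\<in>fsupp g. dist x y \<ge> \<delta>)"

definition restr_Lp_bounded ::
  "real \<Rightarrow> 'a::euclidean_space measure \<Rightarrow> 'a measure \<Rightarrow> ('a \<times> 'a \<Rightarrow> complex) \<Rightarrow> real \<Rightarrow> bool" where
  "restr_Lp_bounded p \<mu> \<nu> K C \<longleftrightarrow>
     (\<forall>f g. admissible_pair f g \<longrightarrow>
        norm (\<integral>z. K z * f (snd z) * g (fst z) \<partial>(completion (\<nu> \<Otimes>\<^sub>M \<mu>)))
          \<le> C * Lp_norm \<mu> p f * Lp_norm \<nu> (p / (p - 1)) g)"

definition schur_multiplier_bound ::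
  "real \<Rightarrow> 'a::euclidean_space measure \<Rightarrow> 'a measure \<Rightarrow> ('a \<times> 'a \<Rightarrow> complex) \<Rightarrow> real \<Rightarrow> bool" where
  "schur_multiplier_bound p \<mu> \<nu> M B \<longleftrightarrow>
     (\<forall>K C. singular_kernel \<mu> \<nu> K \<and> restr_Lp_bounded p \<mu> \<nu> K C \<longrightarrow>
        singular_kernel \<mu> \<nu> (\<lambda>z. M z * K z) \<and>
        restr_Lp_bounded p \<mu> \<nu> (\<lambda>z. M z * K z) (B * C))"

definition fourier :: "('b::euclidean_space \<Rightarrow> complex) \<Rightarrow> 'b \<Rightarrow> complex" where
  "fourier h \<xi> = (\<integral>x. h x * cis (- (\<xi> \<bullet> x)) \<partial>lborel)"

end

theory Submission
  imports Defs
begin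



lemma radon_space: "radon_measure \<mu> \<Longrightarrow> space \<mu> = UNIV"
  unfolding radon_measure_def by (metis sets_eq_imp_space_eq space_borel)



lemma radon_sigma_finite:
  assumes "radon_measure (\<mu>::'a::euclidean_space measure)"
  shows "sigma_finite_measure \<mu>"
proof -
  let ?C = "range (\<lambda>n::nat. cball (0::'a) (real n))"
  have 1: "countable ?C" by simp
  have 2: "?C \<subseteq> sets \<mu>" using assms unfolding radon_measure_def by auto
  have 3: "\<Union>?C = space \<mu>"
  proof -
    have "x \<in> (\<Union>n::nat. cball (0::'a) (real n))" for x
    proof -
      obtain n::nat where "norm x \<le> real n" using real_arch_simple by blast
      then show ?thesis by (auto simp: dist_norm)
    qed
    then show ?thesis using radon_space[OF assms] by auto
  qed
  have 4: "\<forall>a\<in>?C. emeasure \<mu> a \<noteq> \<infinity>"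
    using assms unfolding radon_measure_def by (auto simp: less_top)
  show ?thesis unfolding sigma_finite_measure_def using 1 2 3 4 by (intro exI[of _ ?C]) simp
qed


lemma sigma_finite_completion:
  assumes "sigma_finite_measure M"
  shows "sigma_finite_measure (completion M)"
proof -
  interpret sigma_finite_measure M by fact
  from sigma_finite_countable obtain C
    where C: "countable C" "C \<subseteq> sets M" "(\<Union>C) = space M" "\<forall>a\<in>C. emeasure M a \<noteq> \<infinity>"
    by blast
  have 2: "C \<subseteq> sets (completion M)" using C(2) sets_completionI_sets by blast
  have 3: "(\<Union>C) = space (completion M)" using C(3) by simp
  have 4: "\<forall>a\<in>C. emeasure (completion M) a \<noteq> \<infinity>"
  proof
    fix a assume "a \<in> C"
    then have am: "a \<in> sets M" using C(2) by blast
    then have "emeasure (completion M) a = emeasure M a" using emeasure_completion[OF sets_completionI_sets[of a M]] main_part[of a M] by simp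
    then show "emeasure (completion M) a \<noteq> \<infinity>" using C(4) \<open>a \<in> C\<close> by simp
  qed
  show ?thesis unfolding sigma_finite_measure_def using C(1) 2 3 4 by (intro exI[of _ C]) simp
qed

lemma radon_pair_sets:
  assumes "radon_measure (\<nu>::'a::euclidean_space measure)" "radon_measure (\<mu>::'a measure)"
  shows "sets (\<nu> \<Otimes>\<^sub>M \<mu>) = sets (borel :: ('a \<times> 'a) measure)"
proof -
  have a: "sets \<nu> = sets (borel::'a measure)" "sets \<mu> = sets (borel::'a measure)"
    using assms unfolding radon_measure_def by blast+
  have "sets (\<nu> \<Otimes>\<^sub>M \<mu>) = sets (borel \<Otimes>\<^sub>M (borel :: 'a measure))"
    by (rule sets_pair_measure_cong[OF a])
  then show ?thesis by (simp only: borel_prod)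
qed

lemma radon_Q_meas:
  assumes "radon_measure (\<nu>::'a::euclidean_space measure)" "radon_measure (\<mu>::'a measure)"
  shows "(\<lambda>z. z) \<in> borel_measurable (completion (\<nu> \<Otimes>\<^sub>M \<mu>))"
proof -
  have "(\<lambda>z. z) \<in> borel_measurable (borel :: ('a \<times> 'a) measure)" by (rule measurable_ident_sets) simp
  then have "(\<lambda>z. z) \<in> borel_measurable (\<nu> \<Otimes>\<^sub>M \<mu>)"
    using measurable_cong_sets[OF radon_pair_sets[OF assms] refl] by blast
  then show ?thesis by (rule measurable_completion)
qed





lemma Q_meas:
  assumes "radon_measure (\<nu>::'a::euclidean_space measure)" "radon_measure (\<mu>::'a measure)"
    and "F \<in> borel_measurable (borel :: ('a \<times> 'a) measure)"
  shows "F \<in> borel_measurable (completion (\<nu> \<Otimes>\<^sub>M \<mu>))"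
  using measurable_compose[OF radon_Q_meas[OF assms(1,2)] assms(3)] by (simp only:)

lemma fsupp_zero:
  assumes "x \<notin> fsupp f" shows "f x = 0"
proof (rule ccontr)
  assume "f x \<noteq> 0"
  then have "x \<in> {x. f x \<noteq> 0}" by simp
  then have "x \<in> fsupp f" unfolding fsupp_def by (rule subsetD[OF closure_subset])
  with assms show False by simp
qed

lemma kfg_integrable:
  fixes \<mu> \<nu> :: "'a::euclidean_space measure"
  assumes rn: "radon_measure \<nu>" and rm: "radon_measure \<mu>"
    and K: "singular_kernel \<mu> \<nu> K" and fg: "admissible_pair f g"
  shows "integrable (completion (\<nu> \<Otimes>\<^sub>M \<mu>)) (\<lambda>z. K z * f (snd z) * g (fst z))"
proof -
  define Q where "Q = completion (\<nu> \<Otimes>\<^sub>M \<mu>)"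
  have fm: "f \<in> borel_measurable borel" and gm: "g \<in> borel_measurable borel"
    and cf: "compact (fsupp f)" and cg: "compact (fsupp g)"
    using fg unfolding admissible_pair_def by auto
  obtain \<delta> where dpos: "\<delta> > 0" and dsep: "\<forall>x\<in>fsupp f. \<forall>y\<in>fsupp g. dist x y \<ge> \<delta>"
    using fg unfolding admissible_pair_def by auto
  obtain Bf where Bf: "\<And>x. norm (f x) \<le> Bf"
    using fg unfolding admissible_pair_def bounded_iff by auto
  obtain Bg where Bg: "\<And>x. norm (g x) \<le> Bg"
    using fg unfolding admissible_pair_def bounded_iff by auto
  have Bf0: "Bf \<ge> 0" using Bf[of 0] norm_ge_zero[of "f 0"] by linarith
  have Bg0: "Bg \<ge> 0" using Bg[of 0] norm_ge_zero[of "g 0"] by linarith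
  define c where "c = Bf * Bg"
  have c0: "c \<ge> 0" using Bf0 Bg0 by (simp add: c_def)
  define D where "D = fsupp g \<times> fsupp f"
  have cD: "compact D" using cf cg by (simp add: D_def compact_Times)
  have dD: "D \<inter> {z. fst z = snd z} = {}"
  proof (rule ccontr)
    assume "D \<inter> {z. fst z = snd z} \<noteq> {}"
    then obtain s where "s \<in> fsupp g" "s \<in> fsupp f" by (auto simp: D_def)
    then have "dist s s \<ge> \<delta>" using dsep by blast
    then show False using dpos by simp
  qed
  have Km: "K \<in> borel_measurable Q" and L2: "(\<integral>\<^sup>+ z. ennreal ((norm (K z))\<^sup>2) * indicator D z \<partial>Q) < \<infinity>"
    using K cD dD unfolding singular_kernel_def Q_def by auto
  have Dsets: "D \<in> sets (\<nu> \<Otimes>\<^sub>M \<mu>)"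
    using radon_pair_sets[OF rn rm] cD by (simp add: compact_imp_closed borel_closed)
  have sgn: "fsupp g \<in> sets \<nu>" using rn cg unfolding radon_measure_def by (simp add: compact_imp_closed borel_closed)
  have sfm: "fsupp f \<in> sets \<mu>" using rm cf unfolding radon_measure_def by (simp add: compact_imp_closed borel_closed)
  interpret mu: sigma_finite_measure \<mu> by (rule radon_sigma_finite[OF rm])
  have "emeasure Q D = emeasure \<nu> (fsupp g) * emeasure \<mu> (fsupp f)"
    using Dsets sgn sfm by (simp add: Q_def D_def mu.emeasure_pair_measure_Times)
  also have "\<dots> < \<infinity>"
    using rn rm cf cg unfolding radon_measure_def by (simp add: ennreal_mult_less_top)
  finally have QD: "emeasure Q D < \<infinity>" .
  have fsm: "(\<lambda>z. f (snd z)) \<in> borel_measurable Q"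
    unfolding Q_def by (rule Q_meas[OF rn rm]) (rule measurable_compose[OF _ fm], intro borel_measurable_continuous_onI continuous_intros)
  have gfm: "(\<lambda>z. g (fst z)) \<in> borel_measurable Q"
    unfolding Q_def by (rule Q_meas[OF rn rm]) (rule measurable_compose[OF _ gm], intro borel_measurable_continuous_onI continuous_intros)
  have meas: "(\<lambda>z. K z * f (snd z) * g (fst z)) \<in> borel_measurable Q"
    using Km fsm gfm by measurable
  have DQ: "D \<in> sets Q" using Dsets by (simp add: Q_def)
  have "(\<integral>\<^sup>+ z. ennreal (norm (K z * f (snd z) * g (fst z))) \<partial>Q)
      \<le> (\<integral>\<^sup>+ z. ennreal c * (indicator D z + ennreal ((norm (K z))\<^sup>2) * indicator D z) \<partial>Q)"
  proof (rule nn_integral_mono)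
    fix z
    show "ennreal (norm (K z * f (snd z) * g (fst z)))
        \<le> ennreal c * (indicator D z + ennreal ((norm (K z))\<^sup>2) * indicator D z)"
    proof (cases "z \<in> D")
      case True
      have k: "norm (K z) \<le> 1 + (norm (K z))\<^sup>2"
      proof -
        have k0: "0 \<le> norm (K z)" by simp
        have "0 \<le> (norm (K z) - 1) * (norm (K z) - 1)" by simp
        then have "0 \<le> norm (K z) * norm (K z) - 2 * norm (K z) + 1" by (simp add: algebra_simps)
        then show ?thesis using k0 unfolding power2_eq_square by linarith
      qed
      have "norm (K z * f (snd z) * g (fst z)) = norm (K z) * norm (f (snd z)) * norm (g (fst z))"
        by (simp add: norm_mult)
      also have "\<dots> \<le> norm (K z) * Bf * Bg"
        using Bf Bg Bf0 by (intro mult_mono) (auto intro: mult_nonneg_nonneg)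
      also have "\<dots> = c * norm (K z)" by (simp add: c_def mult_ac)
      also have "\<dots> \<le> c * (1 + (norm (K z))\<^sup>2)" by (rule mult_left_mono[OF k c0])
      finally have "ennreal (norm (K z * f (snd z) * g (fst z))) \<le> ennreal (c * (1 + (norm (K z))\<^sup>2))"
        by (rule ennreal_leI)
      also have "\<dots> = ennreal c * (indicator D z + ennreal ((norm (K z))\<^sup>2) * indicator D z)"
        using True c0 by (simp add: ennreal_mult ennreal_plus)
      finally show ?thesis .
    next
      case False
      then have "f (snd z) = 0 \<or> g (fst z) = 0"
        by (cases z) (auto simp: D_def intro: fsupp_zero)
      then show ?thesis by auto
    qed
  qed
  also have "\<dots> = ennreal c * (emeasure Q D + (\<integral>\<^sup>+ z. ennreal ((norm (K z))\<^sup>2) * indicator D z \<partial>Q))"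
    using DQ Km by (simp add: nn_integral_cmult nn_integral_add nn_integral_indicator)
  also have "\<dots> < \<infinity>"
    using QD L2 by (simp add: ennreal_mult_less_top)
  finally show ?thesis
    unfolding Q_def[symmetric] by (intro integrableI_bounded meas)
qed




lemma cis_meas[measurable]: "(\<lambda>x::real. cis x) \<in> borel_measurable borel"
  by (intro borel_measurable_continuous_onI continuous_on_cis continuous_on_id)

lemma mod_admissible:
  fixes f g :: "'a::euclidean_space \<Rightarrow> complex"
  assumes fg: "admissible_pair f g"
  shows "admissible_pair (\<lambda>t. f t * cis (- (t \<bullet> y))) (\<lambda>s. g s * cis (- (s \<bullet> x)))"
proof -
  have fm: "f \<in> borel_measurable borel" and gm: "g \<in> borel_measurable borel"
    using fg unfolding admissible_pair_def by auto
  have sf: "fsupp (\<lambda>t. f t * cis (- (t \<bullet> y))) = fsupp f" unfolding fsupp_def by simp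
  have sg: "fsupp (\<lambda>s. g s * cis (- (s \<bullet> x))) = fsupp g" unfolding fsupp_def by simp
  obtain Bf where Bf: "\<And>x. norm (f x) \<le> Bf"
    using fg unfolding admissible_pair_def bounded_iff by auto
  obtain Bg where Bg: "\<And>x. norm (g x) \<le> Bg"
    using fg unfolding admissible_pair_def bounded_iff by auto
  have m1: "(\<lambda>t. f t * cis (- (t \<bullet> y))) \<in> borel_measurable borel" using fm by measurable
  have m2: "(\<lambda>s. g s * cis (- (s \<bullet> x))) \<in> borel_measurable borel" using gm by measurable
  have b1: "bounded (range (\<lambda>t. f t * cis (- (t \<bullet> y))))"
    unfolding bounded_iff using Bf by (auto simp: norm_mult)
  have b2: "bounded (range (\<lambda>s. g s * cis (- (s \<bullet> x))))"
    unfolding bounded_iff using Bg by (auto simp: norm_mult)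
  show ?thesis using fg m1 m2 b1 b2 unfolding admissible_pair_def sf sg by blast
qed

lemma Lp_norm_mod: "Lp_norm \<mu> p (\<lambda>t. f t * cis (c t)) = Lp_norm \<mu> p f"
  unfolding Lp_norm_def by (simp add: norm_mult)




theorem lemma2p6:
  fixes \<mu> \<nu> :: "'a::euclidean_space measure"
    and p :: real
    and M h :: "'a \<times> 'a \<Rightarrow> complex"
  assumes "1 < p"
    and "radon_measure \<mu>" and "radon_measure \<nu>"
    and "integrable lborel h"
    and "M = fourier h"
  shows "schur_multiplier_bound p \<mu> \<nu> M (\<integral>x. norm (h x) \<partial>lborel)"
proof -
  note rm = assms(2) and rn = assms(3) and hint = assms(4)
  define Q where "Q = completion (\<nu> \<Otimes>\<^sub>M \<mu>)"
  define B where "B = (\<integral>x. norm (h x) \<partial>lborel)"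
  have hm[measurable]: "h \<in> borel_measurable borel"
    using borel_measurable_integrable[OF hint] by simp
  have Mdef: "\<And>z. M z = (\<integral>w. h w * cis (- (z \<bullet> w)) \<partial>lborel)"
    using assms(5) by (simp add: fourier_def)
  have Mbound: "norm (M z) \<le> B" for z
  proof -
    have "norm (M z) \<le> (\<integral>w. norm (h w * cis (- (z \<bullet> w))) \<partial>lborel)"
      unfolding Mdef by (rule integral_norm_bound)
    also have "\<dots> = B" by (simp add: B_def norm_mult)
    finally show ?thesis .
  qed
  have B0: "B \<ge> 0" using Mbound[of 0] norm_ge_zero[of "M 0"] by linarith
  have Mmeas: "M \<in> borel_measurable borel"
  proof -
    have "(\<lambda>(z, w). h w * cis (- (z \<bullet> w))) \<in> borel_measurable (borel \<Otimes>\<^sub>M lborel)"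
      by measurable
    then have "(\<lambda>z. \<integral>w. h w * cis (- (z \<bullet> w)) \<partial>lborel) \<in> borel_measurable borel"
      by (rule lborel.borel_measurable_lebesgue_integral)
    moreover have "M = (\<lambda>z. \<integral>w. h w * cis (- (z \<bullet> w)) \<partial>lborel)"
      by (rule ext) (rule Mdef)
    ultimately show ?thesis by simp
  qed
  have MQ: "M \<in> borel_measurable Q" unfolding Q_def by (rule Q_meas[OF rn rm Mmeas])
  interpret nu: sigma_finite_measure \<nu> by (rule radon_sigma_finite[OF rn])
  interpret mu: sigma_finite_measure \<mu> by (rule radon_sigma_finite[OF rm])
  interpret numu: pair_sigma_finite \<nu> \<mu> ..
  have sfQ: "sigma_finite_measure Q" unfolding Q_def
    by (rule sigma_finite_completion) (rule numu.P.sigma_finite_measure_axioms)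
  interpret Qs: sigma_finite_measure Q by (rule sfQ)
  interpret WQ: pair_sigma_finite lborel Q ..
  show ?thesis unfolding schur_multiplier_bound_def B_def[symmetric]
  proof (intro allI impI conjI)
    fix K C assume KC: "singular_kernel \<mu> \<nu> K \<and> restr_Lp_bounded p \<mu> \<nu> K C"
    then have Ksk: "singular_kernel \<mu> \<nu> K" and Kr: "restr_Lp_bounded p \<mu> \<nu> K C" by auto
    have KQ: "K \<in> borel_measurable Q" using Ksk unfolding singular_kernel_def Q_def by auto
    show "singular_kernel \<mu> \<nu> (\<lambda>z. M z * K z)"
      unfolding singular_kernel_def Q_def[symmetric]
    proof (intro conjI allI impI)
      show "(\<lambda>z. M z * K z) \<in> borel_measurable Q" using MQ KQ by measurable
      fix D :: "('a \<times> 'a) set" assume D: "compact D \<and> D \<inter> {z. fst z = snd z} = {}"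
      have DQ: "D \<in> sets Q" using radon_pair_sets[OF rn rm] D unfolding Q_def
        by (simp add: compact_imp_closed borel_closed)
      have L2: "(\<integral>\<^sup>+ z. ennreal ((norm (K z))\<^sup>2) * indicator D z \<partial>Q) < \<infinity>"
        using Ksk D unfolding singular_kernel_def Q_def by auto
      have "(\<integral>\<^sup>+ z. ennreal ((norm (M z * K z))\<^sup>2) * indicator D z \<partial>Q)
          \<le> (\<integral>\<^sup>+ z. ennreal (B\<^sup>2) * (ennreal ((norm (K z))\<^sup>2) * indicator D z) \<partial>Q)"
      proof (rule nn_integral_mono)
        fix z
        have "(norm (M z * K z))\<^sup>2 = (norm (M z))\<^sup>2 * (norm (K z))\<^sup>2"
          by (simp add: norm_mult power_mult_distrib)
        also have "\<dots> \<le> B\<^sup>2 * (norm (K z))\<^sup>2"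
          by (intro mult_right_mono power_mono Mbound) auto
        finally have le: "(norm (M z * K z))\<^sup>2 \<le> B\<^sup>2 * (norm (K z))\<^sup>2" .
        show "ennreal ((norm (M z * K z))\<^sup>2) * indicator D z
            \<le> ennreal (B\<^sup>2) * (ennreal ((norm (K z))\<^sup>2) * indicator D z)"
          using le by (auto simp: indicator_def ennreal_mult[symmetric] intro: ennreal_leI)
      qed
      also have "\<dots> = ennreal (B\<^sup>2) * (\<integral>\<^sup>+ z. ennreal ((norm (K z))\<^sup>2) * indicator D z \<partial>Q)"
        by (rule nn_integral_cmult) (use KQ DQ in \<open>measurable\<close>)
      also have "\<dots> < \<infinity>" using L2 by (simp add: ennreal_mult_less_top)
      finally show "(\<integral>\<^sup>+ z. ennreal ((norm (M z * K z))\<^sup>2) * indicator D z \<partial>Q) < \<infinity>" .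
    qed
    show "restr_Lp_bounded p \<mu> \<nu> (\<lambda>z. M z * K z) (B * C)"
      unfolding restr_Lp_bounded_def Q_def[symmetric]
    proof (intro allI impI)
      fix f g :: "'a \<Rightarrow> complex" assume fg: "admissible_pair f g"
      define a where "a = Lp_norm \<mu> p f"
      define b where "b = Lp_norm \<nu> (p / (p - 1)) g"
      define fw where "fw w = (\<lambda>t. f t * cis (- (t \<bullet> snd w)))" for w :: "'a \<times> 'a"
      define gw where "gw w = (\<lambda>s. g s * cis (- (s \<bullet> fst w)))" for w :: "'a \<times> 'a"
      define I where "I w = (\<integral>z. K z * fw w (snd z) * gw w (fst z) \<partial>Q)" for w
      have adm: "admissible_pair (fw w) (gw w)" for w
        unfolding fw_def gw_def by (rule mod_admissible[OF fg])
      have Ib: "norm (I w) \<le> C * a * b" for w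
      proof -
        have "norm (I w) \<le> C * Lp_norm \<mu> p (fw w) * Lp_norm \<nu> (p / (p - 1)) (gw w)"
          using Kr adm[of w] unfolding restr_Lp_bounded_def I_def Q_def by blast
        then show ?thesis unfolding a_def b_def fw_def gw_def Lp_norm_mod .
      qed
      define F where "F w z = h w * cis (- (z \<bullet> w)) * (K z * f (snd z) * g (fst z))" for w z
      have Feq: "F w z = h w * (K z * fw w (snd z) * gw w (fst z))" for w z
      proof -
        have "cis (- (z \<bullet> w)) = cis (- (snd z \<bullet> snd w)) * cis (- (fst z \<bullet> fst w))"
          by (cases z; cases w) (simp add: cis_mult algebra_simps)
        then show ?thesis unfolding F_def fw_def gw_def by (simp add: ac_simps)
      qed
      have kfg: "integrable Q (\<lambda>z. K z * f (snd z) * g (fst z))"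
        unfolding Q_def by (rule kfg_integrable[OF rn rm Ksk fg])
      have kfgw: "integrable Q (\<lambda>z. K z * fw w (snd z) * gw w (fst z))" for w
        unfolding Q_def by (rule kfg_integrable[OF rn rm Ksk adm])
      have idQ: "(\<lambda>z. z) \<in> borel_measurable Q" unfolding Q_def by (rule radon_Q_meas[OF rn rm])
      have Fm: "(\<lambda>x. F (fst x) (snd x)) \<in> borel_measurable (lborel \<Otimes>\<^sub>M Q)"
      proof -
        have s: "(\<lambda>x. snd x) \<in> borel_measurable (lborel \<Otimes>\<^sub>M Q)"
          by (rule measurable_compose[OF measurable_snd idQ])
        have k: "(\<lambda>x. K (snd x) * f (snd (snd x)) * g (fst (snd x))) \<in> borel_measurable (lborel \<Otimes>\<^sub>M Q)"
          by (rule measurable_compose[OF measurable_snd borel_measurable_integrable[OF kfg]])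
        have c: "(\<lambda>x. cis (- (snd x \<bullet> fst x))) \<in> borel_measurable (lborel \<Otimes>\<^sub>M Q)"
          using s by measurable
        have hh: "(\<lambda>x. h (fst x)) \<in> borel_measurable (lborel \<Otimes>\<^sub>M Q)" by measurable
        show ?thesis unfolding F_def using hh c k by measurable
      qed
      have Fint: "integrable (lborel \<Otimes>\<^sub>M Q) (case_prod F)"
      proof (rule WQ.Fubini_integrable)
        show "case_prod F \<in> borel_measurable (lborel \<Otimes>\<^sub>M Q)" using Fm by (simp add: case_prod_beta')
        have "(\<lambda>x. \<integral>y. norm (case_prod F (x, y)) \<partial>Q)
            = (\<lambda>x. norm (h x) * (\<integral>y. norm (K y * f (snd y) * g (fst y)) \<partial>Q))"
          by (simp add: F_def norm_mult fun_eq_iff)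
        moreover have "integrable lborel (\<lambda>x. norm (h x) * (\<integral>y. norm (K y * f (snd y) * g (fst y)) \<partial>Q))"
          using hint by (intro integrable_mult_left integrable_norm)
        ultimately show "integrable lborel (\<lambda>x. \<integral>y. norm (case_prod F (x, y)) \<partial>Q)" by simp
        show "AE x in lborel. integrable Q (\<lambda>y. case_prod F (x, y))"
          using kfgw by (simp add: Feq)
      qed
      have "(\<integral>z. M z * K z * f (snd z) * g (fst z) \<partial>Q) = (\<integral>z. (\<integral>w. F w z \<partial>lborel) \<partial>Q)"
        by (rule Bochner_Integration.integral_cong[OF refl])
           (unfold F_def integral_mult_left_zero Mdef, simp only: mult.assoc)
      also have "\<dots> = (\<integral>w. (\<integral>z. F w z \<partial>Q) \<partial>lborel)"
        by (rule WQ.Fubini_integral[OF Fint])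
      also have "\<dots> = (\<integral>w. h w * I w \<partial>lborel)"
        by (simp add: Feq I_def)
      finally have eq: "(\<integral>z. M z * K z * f (snd z) * g (fst z) \<partial>Q) = (\<integral>w. h w * I w \<partial>lborel)" .
      have int1: "integrable lborel (\<lambda>w. h w * I w)"
      proof -
        have "integrable lborel (\<lambda>w. \<integral>z. case_prod F (w, z) \<partial>Q)"
          by (rule WQ.integrable_fst'[OF Fint])
        then show ?thesis by (simp add: Feq I_def)
      qed
      have int2: "integrable lborel (\<lambda>w. norm (h w) * (C * a * b))"
        using hint by (intro integrable_mult_left integrable_norm)
      have "norm (\<integral>w. h w * I w \<partial>lborel) \<le> (\<integral>w. norm (h w) * (C * a * b) \<partial>lborel)"
      proof (rule Bochner_Integration.integral_norm_bound_integral[OF int1 int2])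
        fix w
        show "norm (h w * I w) \<le> norm (h w) * (C * a * b)"
          unfolding norm_mult by (intro mult_left_mono Ib norm_ge_zero)
      qed
      also have "\<dots> = B * C * a * b" by (simp add: B_def)
      finally show "norm (\<integral>z. M z * K z * f (snd z) * g (fst z) \<partial>Q)
          \<le> B * C * Lp_norm \<mu> p f * Lp_norm \<nu> (p / (p - 1)) g"
        unfolding eq a_def b_def .
    qed
  qed
qed


end
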